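(* Let $p\ge 2$ and $A\in\mathcal{B}_I(p)$ with common between-group parameter $c$, and let $\alpha_k=\frac1{n_k}+\frac{n_k-1}{n_k}b_k$ ($k=1,\dots,p$). Let $d(c)=\det\phi(A)$, i.e. the determinant of the $p\times p$ matrix with diagonal $\alpha_1,\dots,\alpha_p$ and all off-diagonal entries $c$, viewed as a polynomial in $c$ with $\alpha_1,\dots,\alpha_p$ fixed. When all $\alpha_k>0$, all roots of this polynomial are real; let $r_{p,1}<0$ be its smallest root and $r_{p,2}>0$ its second smallest root (so that, with $\alpha_{(1)}\le\alpha_{(2)}$ the two smallest $\alpha$'s, $r_{p,1}$ is the unique root in $]-\sqrt{\alpha_{(1)}\alpha_{(2)}},0[$ and $r_{p,2}$ the unique root in $]0,\sqrt{\alpha_{(1)}\alpha_{(2)}}]$ up to the ordering conventions of the sorted case). Then $$A\succ 0\iff 0<\alpha_k<1\ \text{for all }k\in\{1,\dots,p\}\ \text{ and }\ r_{p,1}<c<r_{p,2}.$$ Furthermore, for each $k$, the interval $]r_{p,1},r_{p,2}[$ is nondecreasing (with respect to inclusion) in $\alpha_k$: increasing $\alpha_k$ (keeping the other $\alpha$'s fixed and positive) yields an interval containing the previous one.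
   Context: All matrices are real; $\succ 0$ means positive definite. $J_m$ denotes the $m\times m$ matrix of ones, $J_{m,q}=\mathbf 1_m\mathbf 1_q^\top$. For integers $n_1,\dots,n_p\ge1$, $n=\sum n_k$, $\mathcal{B}(p)$ is the set of symmetric $n\times n$ block matrices $A=(A_{k,\ell})$ (block $A_{k,\ell}$ of size $n_k\times n_\ell$) with $A_{k,k}=(1-b_k)I_{n_k}+b_kJ_{n_k}$ and $A_{k,\ell}=A_{\ell,k}^\top=c_{k,\ell}J_{n_k,n_\ell}$ ($k<\ell$), all $b_k,c_{k,\ell}\in]-1,1[$, with $b_k=0$ if $n_k=1$. $\mathcal{B}_I(p)$ is the subset of $\mathcal{B}(p)$ where $c_{k,\ell}=c$ for all $k<\ell$. $\phi(A)$ is the $p\times p$ matrix of block averages $[\phi(A)]_{k,\ell}=\frac{1}{n_kn_\ell}\sum_{i\in G_k,j\in G_\ell}A_{i,j}$ ($G_1$ the first $n_1$ indices, $G_2$ the next $n_2$, etc.); for $A\in\mathcal{B}_I(p)$ it has diagonal $\alpha_1,\dots,\alpha_p$ and off-diagonal entries $c$. *)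

theory Defs
  imports "Jordan_Normal_Form.Determinant"
begin

text \<open>Group index of row/column i (0-based): groups G_0, G_1, ... are consecutive
  index ranges of sizes n 0, n 1, ...\<close>
definition grp :: "(nat \<Rightarrow> nat) \<Rightarrow> nat \<Rightarrow> nat" where
  "grp n i = (LEAST k. i < (\<Sum>j<Suc k. n j))"

text \<open>The block matrix of B(p): diagonal blocks (1-b_k)I + b_k J, off-diagonal blocks c_{k,l} J.\<close>
definition block_mat :: "nat \<Rightarrow> (nat \<Rightarrow> nat) \<Rightarrow> (nat \<Rightarrow> real) \<Rightarrow> (nat \<Rightarrow> nat \<Rightarrow> real) \<Rightarrow> real mat" where
  "block_mat p n b cc = mat (\<Sum>k<p. n k) (\<Sum>k<p. n k)
     (\<lambda>(i,j). if grp n i = grp n j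
              then (if i = j then 1 else b (grp n i))
              else cc (grp n i) (grp n j))"

definition pos_def :: "real mat \<Rightarrow> bool" where
  "pos_def A \<longleftrightarrow> A \<in> carrier_mat (dim_row A) (dim_row A) \<and> A\<^sup>T = A \<and>
     (\<forall>v \<in> carrier_vec (dim_row A). v \<noteq> 0\<^sub>v (dim_row A) \<longrightarrow> 0 < v \<bullet> (A *\<^sub>v v))"

definition alpha :: "(nat \<Rightarrow> nat) \<Rightarrow> (nat \<Rightarrow> real) \<Rightarrow> nat \<Rightarrow> real" where
  "alpha n b k = 1 / real (n k) + (real (n k) - 1) / real (n k) * b k"

text \<open>The p x p matrix with diagonal alpha_1..alpha_p and all off-diagonal entries x
  (= phi(A) for A in B_I(p) with common parameter x).\<close>
definition phiI :: "nat \<Rightarrow> (nat \<Rightarrow> real) \<Rightarrow> real \<Rightarrow> real mat" where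
  "phiI p \<alpha> x = mat p p (\<lambda>(i,j). if i = j then \<alpha> i else x)"

definition dpoly :: "nat \<Rightarrow> (nat \<Rightarrow> real) \<Rightarrow> real \<Rightarrow> real" where
  "dpoly p \<alpha> x = det (phiI p \<alpha> x)"

definition droots :: "nat \<Rightarrow> (nat \<Rightarrow> real) \<Rightarrow> real set" where
  "droots p \<alpha> = {x. dpoly p \<alpha> x = 0}"

definition r1 :: "nat \<Rightarrow> (nat \<Rightarrow> real) \<Rightarrow> real" where
  "r1 p \<alpha> = Min (droots p \<alpha>)"

definition r2 :: "nat \<Rightarrow> (nat \<Rightarrow> real) \<Rightarrow> real" where
  "r2 p \<alpha> = Min (droots p \<alpha> - {r1 p \<alpha>})"

end

theory Submission
  imports Defs
begin


definition Qf :: "nat \<Rightarrow> (nat\<Rightarrow>real) \<Rightarrow> real \<Rightarrow> (nat\<Rightarrow>real) \<Rightarrow> real" where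
  "Qf p \<alpha> x u = (\<Sum>i<p. (\<alpha> i - x) * (u i)\<^sup>2) + x * (\<Sum>i<p. u i)\<^sup>2"

definition PDQ :: "nat \<Rightarrow> (nat\<Rightarrow>real) \<Rightarrow> real \<Rightarrow> bool" where
  "PDQ p \<alpha> x \<longleftrightarrow> (\<forall>u. (\<exists>i<p. u i \<noteq> 0) \<longrightarrow> 0 < Qf p \<alpha> x u)"

definition kerZ :: "nat \<Rightarrow> (nat\<Rightarrow>real) \<Rightarrow> real \<Rightarrow> bool" where
  "kerZ p \<alpha> x \<longleftrightarrow> (\<exists>u. (\<exists>i<p. u i \<noteq> 0) \<and> (\<forall>i<p. (\<alpha> i - x) * u i + x * (\<Sum>l<p. u l) = 0))"

lemma row_sum: fixes \<alpha> u :: "nat \<Rightarrow> real" assumes "i < p"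
  shows "(\<Sum>j<p. (if i = j then \<alpha> i else x) * u j) = (\<alpha> i - x) * u i + x * (\<Sum>j<p. u j)"
proof -
  have "(\<Sum>j<p. (if i = j then \<alpha> i else x) * u j) = (\<Sum>j<p. x * u j + (if i = j then (\<alpha> i - x) * u j else 0))"
    by (rule sum.cong) (auto simp: algebra_simps)
  also have "\<dots> = x * (\<Sum>j<p. u j) + (\<alpha> i - x) * u i"
    using assms by (simp add: sum.distrib sum_distrib_left algebra_simps)
  finally show ?thesis by (simp add: algebra_simps)
qed

lemma ker_notPD: assumes "kerZ p \<alpha> x" shows "\<not> PDQ p \<alpha> x"
proof -
  obtain u where u: "\<exists>i<p. u i \<noteq> 0" "\<forall>i<p. (\<alpha> i - x) * u i + x * (\<Sum>l<p. u l) = 0"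
    using assms unfolding kerZ_def by blast
  have "0 = (\<Sum>i<p. u i * ((\<alpha> i - x) * u i + x * (\<Sum>l<p. u l)))" using u(2) by simp
  also have "\<dots> = (\<Sum>i<p. (\<alpha> i - x) * (u i)\<^sup>2 + x * (\<Sum>l<p. u l) * u i)"
    by (rule sum.cong) (auto simp: power2_eq_square algebra_simps)
  also have "\<dots> = Qf p \<alpha> x u"
    unfolding Qf_def by (simp add: sum.distrib sum_distrib_left[symmetric] power2_eq_square)
  finally show ?thesis using u(1) unfolding PDQ_def by force
qed

lemma Qf_lin: "Qf p \<alpha> x u = (\<Sum>i<p. \<alpha> i * (u i)\<^sup>2) + x * ((\<Sum>i<p. u i)\<^sup>2 - (\<Sum>i<p. (u i)\<^sup>2))"
  unfolding Qf_def by (simp add: algebra_simps sum_subtractf sum_distrib_left)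

lemma PDQ_convex: assumes "PDQ p \<alpha> x" "PDQ p \<alpha> y" "x \<le> z" "z \<le> y" shows "PDQ p \<alpha> z"
  unfolding PDQ_def
proof (intro allI impI)
  fix u :: "nat \<Rightarrow> real" assume u: "\<exists>i<p. u i \<noteq> 0"
  define A where "A = (\<Sum>i<p. \<alpha> i * (u i)\<^sup>2)"
  define B where "B = ((\<Sum>i<p. u i)\<^sup>2 - (\<Sum>i<p. (u i)\<^sup>2))"
  have x: "0 < A + x * B" and y: "0 < A + y * B"
    using assms(1,2) u unfolding PDQ_def Qf_lin A_def B_def by auto
  have "0 < A + z * B"
  proof (cases "B \<ge> 0")
    case True then have "x * B \<le> z * B" using assms(3) by (simp add: mult_right_mono)
    then show ?thesis using x by linarith
  next
    case False then have "y * B \<le> z * B" using assms(4) by (simp add: mult_right_mono_neg)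
    then show ?thesis using y by linarith
  qed
  then show "0 < Qf p \<alpha> z u" unfolding Qf_lin A_def B_def .
qed

lemma PDQ_mono: assumes "PDQ p \<alpha> x" "\<forall>i<p. \<alpha> i \<le> \<alpha>' i" shows "PDQ p \<alpha>' x"
  unfolding PDQ_def
proof (intro allI impI)
  fix u :: "nat \<Rightarrow> real" assume u: "\<exists>i<p. u i \<noteq> 0"
  have "Qf p \<alpha> x u \<le> Qf p \<alpha>' x u" unfolding Qf_def
    using assms(2) by (auto intro!: sum_mono mult_right_mono)
  then show "0 < Qf p \<alpha>' x u" using assms(1) u unfolding PDQ_def by force
qed

lemma wCS: fixes \<beta> u :: "nat \<Rightarrow> real" assumes "finite I" "I \<noteq> {}" "\<forall>i\<in>I. 0 < \<beta> i"
  shows "(\<Sum>i\<in>I. u i)\<^sup>2 \<le> (\<Sum>i\<in>I. \<beta> i * (u i)\<^sup>2) * (\<Sum>i\<in>I. 1 / \<beta> i)"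
proof -
  define S where "S = (\<Sum>i\<in>I. 1 / \<beta> i)"
  define W where "W = (\<Sum>i\<in>I. \<beta> i * (u i)\<^sup>2)"
  define s where "s = (\<Sum>i\<in>I. u i)"
  have S: "S > 0" unfolding S_def by (rule sum_pos) (use assms in auto)
  define t where "t = s / S"
  have "0 \<le> (\<Sum>i\<in>I. \<beta> i * (u i - t / \<beta> i)\<^sup>2)"
    using assms by (intro sum_nonneg) auto
  also have "\<dots> = (\<Sum>i\<in>I. \<beta> i * (u i)\<^sup>2 - 2 * t * u i + t\<^sup>2 * (1 / \<beta> i))"
    using assms by (intro sum.cong) (auto simp: power2_eq_square field_simps)
  also have "\<dots> = W - 2 * t * s + t\<^sup>2 * S"
    unfolding W_def s_def S_def by (simp add: sum_subtractf sum.distrib sum_distrib_left)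
  also have "\<dots> = W - s\<^sup>2 / S" unfolding t_def using S by (simp add: power2_eq_square field_simps)
  finally have "s\<^sup>2 / S \<le> W" by simp
  then show ?thesis using S unfolding S_def[symmetric] W_def[symmetric] s_def[symmetric]
    by (simp add: pos_divide_le_eq)
qed

definition Gf :: "nat \<Rightarrow> (nat\<Rightarrow>real) \<Rightarrow> real \<Rightarrow> real" where
  "Gf p \<alpha> x = 1 + (\<Sum>i<p. x / (\<alpha> i - x))"

lemma frac_mono: fixes a x y :: real
  assumes "0 < a" "0 < (a - x) * (a - y)" "x < y"
  shows "x / (a - x) < y / (a - y)"
proof -
  have nz: "a - x \<noteq> 0" "a - y \<noteq> 0" using assms(2) by auto
  have "x / (a - x) - y / (a - y) = a * (x - y) / ((a - x) * (a - y))"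
    using nz by (simp add: field_simps)
  also have "\<dots> < 0" using assms by (intro divide_neg_pos) (auto intro: mult_pos_neg)
  finally show ?thesis by simp
qed

lemma ker_G: fixes \<alpha> :: "nat \<Rightarrow> real"
  assumes p: "0 < p" and nz: "\<forall>i<p. \<alpha> i - x \<noteq> 0"
  shows "kerZ p \<alpha> x \<longleftrightarrow> Gf p \<alpha> x = 0"
proof
  assume "kerZ p \<alpha> x"
  then obtain u where u: "\<exists>i<p. u i \<noteq> 0" "\<forall>i<p. (\<alpha> i - x) * u i + x * (\<Sum>l<p. u l) = 0"
    unfolding kerZ_def by blast
  define \<sigma> where "\<sigma> = (\<Sum>l<p. u l)"
  have ui: "u i = - (x * \<sigma>) / (\<alpha> i - x)" if "i < p" for i
    using u(2) nz that unfolding \<sigma>_def by (simp add: field_simps)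
  have "\<sigma> \<noteq> 0"
  proof
    assume "\<sigma> = 0"
    then have "\<forall>i<p. u i = 0" using ui by simp
    then show False using u(1) by blast
  qed
  have "\<sigma> * Gf p \<alpha> x = \<sigma> + (\<Sum>i<p. x * \<sigma> / (\<alpha> i - x))"
    unfolding Gf_def by (simp add: algebra_simps sum_distrib_left)
  also have "(\<Sum>i<p. x * \<sigma> / (\<alpha> i - x)) = (\<Sum>i<p. - u i)"
    by (rule sum.cong) (auto simp: ui)
  also have "\<dots> = - \<sigma>" unfolding \<sigma>_def by (simp add: sum_negf)
  finally show "Gf p \<alpha> x = 0" using \<open>\<sigma> \<noteq> 0\<close> by simp
next
  assume G: "Gf p \<alpha> x = 0"
  define u where "u i = 1 / (\<alpha> i - x)" for i
  have "\<forall>i<p. (\<alpha> i - x) * u i + x * (\<Sum>l<p. u l) = 0"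
  proof (intro allI impI)
    fix i assume "i < p"
    have "(\<alpha> i - x) * u i = 1" using nz \<open>i<p\<close> unfolding u_def by simp
    moreover have "x * (\<Sum>l<p. u l) = (\<Sum>l<p. x / (\<alpha> l - x))"
      unfolding u_def by (simp add: sum_distrib_left)
    ultimately show "(\<alpha> i - x) * u i + x * (\<Sum>l<p. u l) = 0" using G unfolding Gf_def by simp
  qed
  moreover have "u 0 \<noteq> 0" using nz p unfolding u_def by simp
  ultimately show "kerZ p \<alpha> x" unfolding kerZ_def using p by blast
qed

lemma NEG: fixes \<alpha> :: "nat \<Rightarrow> real"
  assumes p: "2 \<le> p" and pos: "\<forall>i<p. 0 < \<alpha> i"
  shows "\<exists>a<0. kerZ p \<alpha> a \<and> (\<forall>x<0. kerZ p \<alpha> x \<longrightarrow> x = a) \<and> (\<forall>x. a < x \<and> x \<le> 0 \<longrightarrow> PDQ p \<alpha> x)"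
proof -
  have mono: "Gf p \<alpha> x < Gf p \<alpha> y" if "x < y" "y \<le> 0" for x y
  proof -
    have "(\<Sum>i<p. x / (\<alpha> i - x)) < (\<Sum>i<p. y / (\<alpha> i - y))"
    proof (rule sum_strict_mono)
      fix i assume "i \<in> {..<p}"
      then have "0 < \<alpha> i" using pos by auto
      then show "x / (\<alpha> i - x) < y / (\<alpha> i - y)"
        using that by (intro frac_mono) (auto intro: mult_pos_pos)
    qed (use p in \<open>auto simp: lessThan_empty_iff\<close>)
    then show ?thesis unfolding Gf_def by simp
  qed
  define K where "K = 2 * (\<Sum>i<p. \<alpha> i)"
  have Kge: "2 * \<alpha> i \<le> K" if "i < p" for i
  proof -
    have "\<alpha> i \<le> (\<Sum>i<p. \<alpha> i)" using that pos by (intro member_le_sum) auto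
    then show ?thesis unfolding K_def by simp
  qed
  have K0: "0 < K" using Kge[of 0] pos p by force
  have trm: "(-K) / (\<alpha> i - (-K)) \<le> -2/3" if "i < p" for i
  proof -
    have d: "0 < \<alpha> i + K" using pos that K0 by force
    have "-K \<le> (-2/3) * (\<alpha> i + K)" using Kge[OF that] by simp
    then show ?thesis using d by (simp add: field_simps)
  qed
  have "(\<Sum>i<p. (-K) / (\<alpha> i - (-K))) \<le> (\<Sum>i<p. -2/3)"
    using trm by (intro sum_mono) auto
  then have GK: "Gf p \<alpha> (-K) \<le> 0" unfolding Gf_def using p by simp
  have G0: "Gf p \<alpha> 0 = 1" unfolding Gf_def by simp
  have cont: "continuous_on {-K..0} (Gf p \<alpha>)"
    unfolding Gf_def
    apply (intro continuous_intros)
    using pos by fastforce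
  obtain a where a: "-K \<le> a" "a \<le> 0" "Gf p \<alpha> a = 0"
    using IVT'[of "Gf p \<alpha>" "-K" 0 0] GK G0 K0 cont by auto
  have a0: "a < 0" using a G0 by (cases "a = 0") auto
  have nzx: "\<forall>i<p. \<alpha> i - x \<noteq> 0" if "x \<le> 0" for x using pos that by force
  have ka: "kerZ p \<alpha> a" using ker_G[of p \<alpha> a] nzx[of a] a p by auto
  have uniq: "\<forall>x<0. kerZ p \<alpha> x \<longrightarrow> x = a"
  proof (intro allI impI)
    fix x assume x: "x < 0" "kerZ p \<alpha> x"
    then have "Gf p \<alpha> x = 0" using ker_G[of p \<alpha> x] nzx[of x] p by auto
    then show "x = a" using mono[of x a] mono[of a x] a x by (cases "x < a"; cases "a < x") auto
  qed
  have pd: "PDQ p \<alpha> x" if x: "a < x" "x \<le> 0" for x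
    unfolding PDQ_def
  proof (intro allI impI)
    fix u :: "nat \<Rightarrow> real" assume u: "\<exists>i<p. u i \<noteq> 0"
    have Gx: "0 < Gf p \<alpha> x" using mono[OF x] a by simp
    define W where "W = (\<Sum>i<p. (\<alpha> i - x) * (u i)\<^sup>2)"
    define S where "S = (\<Sum>i<p. 1 / (\<alpha> i - x))"
    define \<sigma> where "\<sigma> = (\<Sum>i<p. u i)"
    have bpos: "\<forall>i\<in>{..<p}. 0 < \<alpha> i - x" using pos x by force
    have cs: "\<sigma>\<^sup>2 \<le> W * S" unfolding \<sigma>_def W_def S_def
      by (rule wCS) (use p bpos in \<open>auto simp: lessThan_empty_iff\<close>)
    obtain i where i: "i < p" "u i \<noteq> 0" using u by blast
    have h1: "0 \<le> (\<alpha> j - x) * (u j)\<^sup>2" if "j \<in> {..<p}" for j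
      using bpos that by (simp add: less_imp_le)
    have h2: "0 < (\<alpha> i - x) * (u i)\<^sup>2" using bpos i by simp
    have W0: "0 < W" unfolding W_def
      by (rule sum_pos2[of _ i]) (use i h1 h2 in auto)
    have "x * (W * S) \<le> x * \<sigma>\<^sup>2" using cs x(2) by (rule mult_left_mono_neg)
    moreover have xS: "x * S = (\<Sum>i<p. x / (\<alpha> i - x))" unfolding S_def by (simp add: sum_distrib_left)
    moreover have "W * Gf p \<alpha> x = W + W * (x * S)" unfolding Gf_def xS[symmetric] by (simp add: algebra_simps)
    moreover have "W * (x * S) = x * (W * S)" by (simp add: ac_simps)
    ultimately have "W * Gf p \<alpha> x \<le> W + x * \<sigma>\<^sup>2" by linarith
    moreover have "0 < W * Gf p \<alpha> x" using W0 Gx by simp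
    ultimately show "0 < Qf p \<alpha> x u" unfolding Qf_def W_def[symmetric] \<sigma>_def[symmetric] by linarith
  qed
  show ?thesis using a0 ka uniq pd by blast
qed

lemma sum_split: "j < (p::nat) \<Longrightarrow> (\<Sum>i<p. f i) = f j + (\<Sum>i\<in>{..<p}-{j}. f i)"
  by (rule sum.remove) auto

lemma LOW: fixes \<alpha> :: "nat \<Rightarrow> real"
  assumes j: "j < p" and aj: "0 < \<alpha> j" "x \<le> \<alpha> j" and x0: "0 \<le> x"
    and others: "\<forall>i<p. i \<noteq> j \<longrightarrow> x < \<alpha> i"
  shows "PDQ p \<alpha> x"
  unfolding PDQ_def
proof (intro allI impI)
  fix u :: "nat \<Rightarrow> real" assume u: "\<exists>i<p. u i \<noteq> 0"
  have nn: "0 \<le> (\<alpha> l - x) * (u l)\<^sup>2" if "l \<in> {..<p}" for l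
    using others aj that by (cases "l = j") (auto simp: less_imp_le)
  have sq: "0 \<le> x * (\<Sum>i<p. u i)\<^sup>2" using x0 by simp
  show "0 < Qf p \<alpha> x u"
  proof (cases "\<exists>i<p. i \<noteq> j \<and> u i \<noteq> 0")
    case True
    then obtain i where i: "i < p" "i \<noteq> j" "u i \<noteq> 0" by blast
    have "0 < (\<alpha> i - x) * (u i)\<^sup>2" using others i by simp
    then have "0 < (\<Sum>i<p. (\<alpha> i - x) * (u i)\<^sup>2)"
      by (intro sum_pos2[of _ i]) (use i nn in auto)
    then show ?thesis unfolding Qf_def using sq by linarith
  next
    case False
    then have z: "\<forall>i\<in>{..<p}-{j}. u i = 0" by auto
    have uj: "u j \<noteq> 0" using u False by blast
    have "(\<Sum>i<p. (\<alpha> i - x) * (u i)\<^sup>2) = (\<alpha> j - x) * (u j)\<^sup>2"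
      using sum_split[OF j, of "\<lambda>i. (\<alpha> i - x) * (u i)\<^sup>2"] z by simp
    moreover have "(\<Sum>i<p. u i) = u j" using sum_split[OF j, of u] z by simp
    ultimately have "Qf p \<alpha> x u = \<alpha> j * (u j)\<^sup>2" unfolding Qf_def by (simp add: algebra_simps)
    then show ?thesis using aj uj by simp
  qed
qed

lemma MID: fixes \<alpha> :: "nat \<Rightarrow> real"
  assumes p: "2 \<le> p" and j: "j < p" and aj: "0 < \<alpha> j" "\<alpha> j < x"
    and others: "\<forall>i<p. i \<noteq> j \<longrightarrow> x < \<alpha> i" and G: "Gf p \<alpha> x < 0"
  shows "PDQ p \<alpha> x"
  unfolding PDQ_def
proof (intro allI impI)
  fix u :: "nat \<Rightarrow> real" assume u: "\<exists>i<p. u i \<noteq> 0"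
  define I where "I = {..<p} - {j}"
  have fI: "finite I" unfolding I_def by simp
  have neI: "I \<noteq> {}"
  proof
    assume "I = {}"
    then have "{..<p} \<subseteq> {j}" unfolding I_def by auto
    moreover have "0 \<in> {..<p}" "1 \<in> {..<p}" using p by auto
    ultimately have "0 = j" "1 = j" by blast+
    then show False by simp
  qed
  have bpos: "\<forall>i\<in>I. 0 < \<alpha> i - x" using others unfolding I_def by auto
  define W where "W = (\<Sum>i\<in>I. (\<alpha> i - x) * (u i)\<^sup>2)"
  define \<tau> where "\<tau> = (\<Sum>i\<in>I. u i)"
  define S where "S = (\<Sum>i\<in>I. 1 / (\<alpha> i - x))"
  define bj where "bj = \<alpha> j - x"
  define a where "a = \<alpha> j"
  have bj0: "bj < 0" using aj unfolding bj_def by simp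
  have a0: "0 < a" using aj unfolding a_def by simp
  have abj: "a = bj + x" unfolding a_def bj_def by simp
  have S0: "0 < S" unfolding S_def by (rule sum_pos) (use fI neI bpos in auto)
  have cs: "\<tau>\<^sup>2 \<le> W * S" unfolding \<tau>_def W_def S_def by (rule wCS) (use fI neI bpos in auto)
  have W0: "0 \<le> W" unfolding W_def using bpos by (intro sum_nonneg) (auto simp: less_imp_le)
  have Q: "Qf p \<alpha> x u = W + bj * (u j)\<^sup>2 + x * (u j + \<tau>)\<^sup>2"
    unfolding Qf_def W_def \<tau>_def bj_def I_def
    using sum_split[OF j, of "\<lambda>i. (\<alpha> i - x) * (u i)\<^sup>2"] sum_split[OF j, of u] by simp
  have Gs: "Gf p \<alpha> x = 1 + x * S + x / bj"
    unfolding Gf_def S_def bj_def I_def using sum_split[OF j, of "\<lambda>i. x / (\<alpha> i - x)"]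
    by (simp add: sum_distrib_left)
  define g0 where "g0 = bj + x * S * bj + x"
  have g0G: "g0 = bj * Gf p \<alpha> x" unfolding Gs g0_def using bj0 by (simp add: field_simps)
  have g0p: "0 < g0" unfolding g0G using bj0 G by (simp add: mult_neg_neg)
  have ident: "a * \<tau>\<^sup>2 + S * a * (bj * (u j)\<^sup>2 + x * (u j + \<tau>)\<^sup>2)
      = S * (a * u j + x * \<tau>)\<^sup>2 + g0 * \<tau>\<^sup>2"
    unfolding abj g0_def by (simp add: power2_eq_square algebra_simps)
  have "a * \<tau>\<^sup>2 \<le> a * (W * S)" using cs a0 by simp
  then have main: "S * (a * u j + x * \<tau>)\<^sup>2 + g0 * \<tau>\<^sup>2 \<le> (a * S) * Qf p \<alpha> x u"
    unfolding Q ident[symmetric] by (simp add: algebra_simps)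
  have aS: "0 < a * S" using a0 S0 by simp
  show "0 < Qf p \<alpha> x u"
  proof (cases "\<tau> = 0")
    case False
    then have "0 < g0 * \<tau>\<^sup>2" using g0p by simp
    moreover have "0 \<le> S * (a * u j + x * \<tau>)\<^sup>2" using S0 by simp
    ultimately have "0 < (a * S) * Qf p \<alpha> x u" using main by linarith
    then show ?thesis using aS by (simp add: zero_less_mult_iff)
  next
    case True
    show ?thesis
    proof (cases "u j = 0")
      case False
      then have "0 < S * (a * u j + x * \<tau>)\<^sup>2" using S0 a0 True by simp
      moreover have "0 \<le> g0 * \<tau>\<^sup>2" using g0p by simp
      ultimately have "0 < (a * S) * Qf p \<alpha> x u" using main by linarith
      then show ?thesis using aS by (simp add: zero_less_mult_iff)
    next
      case uj: True
      then obtain i where i: "i \<in> I" "u i \<noteq> 0" using u unfolding I_def by auto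
      have "0 < W" unfolding W_def
        by (rule sum_pos2[of _ i]) (use fI i bpos in \<open>auto simp: less_imp_le\<close>)
      then show ?thesis unfolding Q using True uj by simp
    qed
  qed
qed

lemma POS: fixes \<alpha> :: "nat \<Rightarrow> real"
  assumes p: "2 \<le> p" and pos: "\<forall>i<p. 0 < \<alpha> i"
  shows "\<exists>b>0. kerZ p \<alpha> b \<and> (\<forall>x. 0 \<le> x \<and> x < b \<longrightarrow> PDQ p \<alpha> x)"
proof -
  have ne: "\<alpha> ` {..<p} \<noteq> {}" using p by (auto simp: lessThan_empty_iff)
  obtain j where j: "j < p" "\<alpha> j = Min (\<alpha> ` {..<p})"
    using Min_in[OF _ ne] by auto
  have jmin: "\<alpha> j \<le> \<alpha> i" if "i < p" for i using j that by simp
  have aj: "0 < \<alpha> j" using pos j(1) by blast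
  show ?thesis
  proof (cases "\<exists>k<p. k \<noteq> j \<and> \<alpha> k = \<alpha> j")
    case True
    then obtain k where k: "k < p" "k \<noteq> j" "\<alpha> k = \<alpha> j" by blast
    define u :: "nat \<Rightarrow> real" where "u i = (if i = j then 1 else 0) - (if i = k then 1 else 0)" for i
    have su: "(\<Sum>l<p. u l) = 0" unfolding u_def using j k by (simp add: sum_subtractf)
    have "\<forall>i<p. (\<alpha> i - \<alpha> j) * u i + \<alpha> j * (\<Sum>l<p. u l) = 0"
      unfolding su using k by (auto simp: u_def)
    moreover have "u j \<noteq> 0" using k unfolding u_def by simp
    ultimately have "kerZ p \<alpha> (\<alpha> j)" unfolding kerZ_def using j by blast
    moreover have "PDQ p \<alpha> x" if "0 \<le> x" "x < \<alpha> j" for x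
      using LOW[where \<alpha>=\<alpha>, OF j(1) aj, of x] that jmin by force
    ultimately show ?thesis using aj by blast
  next
    case False
    then have gt: "\<alpha> j < \<alpha> i" if "i < p" "i \<noteq> j" for i using jmin[OF that(1)] that by force
    define J where "J = {..<p} - {j}"
    have neJ: "\<alpha> ` J \<noteq> {}"
    proof
      assume "\<alpha> ` J = {}"
      then have "{..<p} \<subseteq> {j}" unfolding J_def by auto
      moreover have "0 \<in> {..<p}" "1 \<in> {..<p}" using p by auto
      ultimately have "0 = j" "1 = j" by blast+
      then show False by simp
    qed
    have "Min (\<alpha> ` J) \<in> \<alpha> ` J" by (rule Min_in) (use neJ J_def in auto)
    then obtain k where k: "k \<in> J" "\<alpha> k = Min (\<alpha> ` J)" by (metis imageE)
    have kk: "k < p" "k \<noteq> j" using k unfolding J_def by auto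
    have kmin: "\<alpha> k \<le> \<alpha> i" if "i < p" "i \<noteq> j" for i
      using k that unfolding J_def by simp
    define m where "m = \<alpha> j"
    define m2 where "m2 = \<alpha> k"
    have mm2: "m < m2" unfolding m_def m2_def using gt kk by simp
    have m0: "0 < m" unfolding m_def using aj .
    define y where "y = (m + 3 * m2) / 4"
    have y: "m < y" "y < m2" unfolding y_def using mm2 by auto
    have mono: "Gf p \<alpha> x < Gf p \<alpha> x'" if "m < x" "x < x'" "x' < m2" for x x'
    proof -
      have "(\<Sum>i<p. x / (\<alpha> i - x)) < (\<Sum>i<p. x' / (\<alpha> i - x'))"
      proof (rule sum_strict_mono)
        fix i assume i: "i \<in> {..<p}"
        have "0 < (\<alpha> i - x) * (\<alpha> i - x')"
        proof (cases "i = j")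
          case True then show ?thesis using that unfolding m_def by (auto intro: mult_neg_neg)
        next
          case False then have "m2 \<le> \<alpha> i" using kmin i unfolding m2_def by auto
          then show ?thesis using that by (auto intro: mult_pos_pos)
        qed
        then show "x / (\<alpha> i - x) < x' / (\<alpha> i - x')"
          using that pos i by (intro frac_mono) auto
      qed (use p in \<open>auto simp: lessThan_empty_iff\<close>)
      then show ?thesis unfolding Gf_def by simp
    qed
    define R where "R x = (\<Sum>i\<in>J. x / (\<alpha> i - x))" for x
    have GR: "Gf p \<alpha> x = 1 + R x + x / (m - x)" for x
      unfolding Gf_def R_def J_def m_def using sum_split[OF j(1), of "\<lambda>i. x / (\<alpha> i - x)"] by simp
    define E where "E x = (x - m) * (1 + R x) - x" for x
    have EG: "E x = (x - m) * Gf p \<alpha> x" if "x \<noteq> m" for x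
      unfolding E_def GR using that by (simp add: field_simps)
    have Jge: "m2 \<le> \<alpha> i" if "i \<in> J" for i using kmin that unfolding J_def m2_def by auto
    have Gy: "0 < Gf p \<alpha> y"
    proof -
      have "y / (\<alpha> k - y) \<le> R y"
        unfolding R_def
      proof -
        have "(\<Sum>i\<in>J. y / (\<alpha> i - y)) = y / (\<alpha> k - y) + (\<Sum>i\<in>J-{k}. y / (\<alpha> i - y))"
          by (rule sum.remove) (use k J_def in auto)
        moreover have "0 \<le> (\<Sum>i\<in>J-{k}. y / (\<alpha> i - y))"
        proof (rule sum_nonneg)
          fix i assume "i \<in> J - {k}"
          then have "m2 \<le> \<alpha> i" using Jge by auto
          then show "0 \<le> y / (\<alpha> i - y)" using y m0 by simp
        qed
        ultimately show "y / (\<alpha> k - y) \<le> (\<Sum>i\<in>J. y / (\<alpha> i - y))" by simp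
      qed
      moreover have "1 + y / (m2 - y) + y / (m - y) > 0"
      proof -
        have d1: "m2 - y = (m2 - m) / 4" and d2: "m - y = - (3 * (m2 - m) / 4)" unfolding y_def by (simp_all add: field_simps)
        have gen: "y / (D / 4) + y / (- (3 * D / 4)) = 8 * y / (3 * D)" if "D \<noteq> 0" for D :: real
          using that by (simp add: field_simps)
        have "y / (m2 - y) + y / (m - y) = 8 * y / (3 * (m2 - m))"
          unfolding d1 d2 using mm2 by (intro gen) simp
        moreover have "0 < 8 * y / (3 * (m2 - m))" using y m0 mm2 by simp
        ultimately show ?thesis by linarith
      qed
      ultimately show ?thesis unfolding GR m2_def by simp
    qed
    have cont: "continuous_on {m..y} E"
      unfolding E_def R_def
      apply (intro continuous_intros)
      using Jge y by fastforce
    have Em: "E m \<le> 0" unfolding E_def using m0 by simp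
    have Ey: "0 \<le> E y" using EG[of y] y Gy by simp
    obtain b where b: "m \<le> b" "b \<le> y" "E b = 0" using IVT'[of E m 0 y] Em Ey y cont by auto
    have bm: "m < b" using b m0 unfolding E_def by (cases "b = m") auto
    have Gb: "Gf p \<alpha> b = 0" using EG[of b] b bm by simp
    have nzb: "\<forall>i<p. \<alpha> i - b \<noteq> 0"
    proof (intro allI impI)
      fix i assume i: "i < p"
      show "\<alpha> i - b \<noteq> 0"
      proof (cases "i = j")
        case True then show ?thesis using bm unfolding m_def by simp
      next
        case False then have "m2 \<le> \<alpha> i" using Jge i unfolding J_def by auto
        then show ?thesis using b y by simp
      qed
    qed
    have kb: "kerZ p \<alpha> b" using ker_G[of p \<alpha> b] nzb Gb p by simp
    have pd: "PDQ p \<alpha> x" if x: "0 \<le> x" "x < b" for x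
    proof (cases "x \<le> m")
      case True
      show ?thesis
      proof (rule LOW[where \<alpha>=\<alpha>, OF j(1) aj])
        show "x \<le> \<alpha> j" using True unfolding m_def .
        show "\<forall>i<p. i \<noteq> j \<longrightarrow> x < \<alpha> i" using gt True unfolding m_def by force
      qed (use x in auto)
    next
      case False
      have "Gf p \<alpha> x < 0" using mono[of x b] False x b y Gb by simp
      moreover have "\<forall>i<p. i \<noteq> j \<longrightarrow> x < \<alpha> i"
      proof (intro allI impI)
        fix i assume "i < p" "i \<noteq> j"
        then have "m2 \<le> \<alpha> i" using Jge unfolding J_def by auto
        then show "x < \<alpha> i" using x b y by simp
      qed
      ultimately show ?thesis using MID[where \<alpha>=\<alpha>, OF p j(1) aj] False unfolding m_def by simp
    qed
    show ?thesis using kb pd bm m0 by (intro exI[of _ b]) auto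
  qed
qed



lemma phiI_carrier: "phiI p \<alpha> x \<in> carrier_mat p p" unfolding phiI_def by simp

lemma phiI_mv: assumes "v \<in> carrier_vec p" "i < p"
  shows "(phiI p \<alpha> x *\<^sub>v v) $ i = (\<alpha> i - x) * v $ i + x * (\<Sum>l<p. v $ l)"
proof -
  have "(phiI p \<alpha> x *\<^sub>v v) $ i = (\<Sum>l<p. (if i = l then \<alpha> i else x) * v $ l)"
    using assms unfolding phiI_def by (simp add: scalar_prod_def atLeast0LessThan)
  also have "\<dots> = (\<alpha> i - x) * v $ i + x * (\<Sum>l<p. v $ l)" using assms(2) by (rule row_sum)
  finally show ?thesis .
qed

lemma det_iff: "dpoly p \<alpha> x = 0 \<longleftrightarrow> kerZ p \<alpha> x"
proof
  assume "dpoly p \<alpha> x = 0"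
  then obtain v where v: "v \<in> carrier_vec p" "v \<noteq> 0\<^sub>v p" "phiI p \<alpha> x *\<^sub>v v = 0\<^sub>v p"
    unfolding dpoly_def using det_0_iff_vec_prod_zero_field[OF phiI_carrier] by blast
  have "\<exists>i<p. v $ i \<noteq> 0"
  proof (rule ccontr)
    assume "\<not> (\<exists>i<p. v $ i \<noteq> 0)"
    then have "v = 0\<^sub>v p" using v(1) by (intro eq_vecI) auto
    then show False using v(2) by simp
  qed
  moreover have "\<forall>i<p. (\<alpha> i - x) * v $ i + x * (\<Sum>l<p. v $ l) = 0"
  proof (intro allI impI)
    fix i assume i: "i < p"
    have "(phiI p \<alpha> x *\<^sub>v v) $ i = 0" using v(3) i by simp
    then show "(\<alpha> i - x) * v $ i + x * (\<Sum>l<p. v $ l) = 0" using phiI_mv[OF v(1) i] by simp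
  qed
  ultimately show "kerZ p \<alpha> x" unfolding kerZ_def by (intro exI[of _ "\<lambda>i. v $ i"]) auto
next
  assume "kerZ p \<alpha> x"
  then obtain u where u: "\<exists>i<p. u i \<noteq> 0" "\<forall>i<p. (\<alpha> i - x) * u i + x * (\<Sum>l<p. u l) = 0"
    unfolding kerZ_def by blast
  define v where "v = vec p u"
  have vc: "v \<in> carrier_vec p" unfolding v_def by simp
  have "v \<noteq> 0\<^sub>v p"
  proof
    assume "v = 0\<^sub>v p"
    then have "\<forall>i<p. u i = 0" unfolding v_def by (metis index_vec index_zero_vec(1))
    then show False using u(1) by blast
  qed
  moreover have "phiI p \<alpha> x *\<^sub>v v = 0\<^sub>v p"
  proof (rule eq_vecI)
    fix i assume "i < dim_vec (0\<^sub>v p :: real vec)"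
    then have i: "i < p" by simp
    have "(\<Sum>l<p. v $ l) = (\<Sum>l<p. u l)" unfolding v_def by simp
    then show "(phiI p \<alpha> x *\<^sub>v v) $ i = (0\<^sub>v p :: real vec) $ i"
      using phiI_mv[OF vc i] u(2) i unfolding v_def by simp
  qed (simp add: phiI_def)
  ultimately show "dpoly p \<alpha> x = 0" unfolding dpoly_def
    using det_0_iff_vec_prod_zero_field[OF phiI_carrier] vc by blast
qed

definition Mp :: "nat \<Rightarrow> (nat\<Rightarrow>real) \<Rightarrow> real poly mat" where
  "Mp p \<alpha> = mat p p (\<lambda>(i,j). if i = j then [:\<alpha> i:] else [:0, 1:])"

lemma dpoly_poly: "dpoly p \<alpha> x = poly (det (Mp p \<alpha>)) x"
proof -
  interpret h: comm_ring_hom "\<lambda>q. poly q x" by unfold_locales auto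
  have "map_mat (\<lambda>q. poly q x) (Mp p \<alpha>) = phiI p \<alpha> x"
    unfolding Mp_def phiI_def by (rule eq_matI) auto
  then show ?thesis unfolding dpoly_def using h.hom_det[of "Mp p \<alpha>"] by simp
qed

lemma MAIN: fixes \<alpha> :: "nat \<Rightarrow> real"
  assumes p: "2 \<le> p" and pos: "\<forall>i<p. 0 < \<alpha> i"
  shows "PDQ p \<alpha> x \<longleftrightarrow> r1 p \<alpha> < x \<and> x < r2 p \<alpha>"
proof -
  obtain a where a: "a < 0" "kerZ p \<alpha> a" "\<forall>x<0. kerZ p \<alpha> x \<longrightarrow> x = a"
    "\<forall>x. a < x \<and> x \<le> 0 \<longrightarrow> PDQ p \<alpha> x" using NEG[OF p pos] by blast
  obtain b where b: "b > 0" "kerZ p \<alpha> b" "\<forall>x. 0 \<le> x \<and> x < b \<longrightarrow> PDQ p \<alpha> x"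
    using POS[OF p pos] by blast
  have P0: "PDQ p \<alpha> 0" using a(1,4) by simp
  have fin: "finite (droots p \<alpha>)"
  proof -
    have "\<not> kerZ p \<alpha> 0" using ker_notPD P0 by blast
    then have "dpoly p \<alpha> 0 \<noteq> 0" using det_iff by blast
    then have "poly (det (Mp p \<alpha>)) 0 \<noteq> 0" using dpoly_poly by metis
    then have "det (Mp p \<alpha>) \<noteq> 0" by auto
    then have "finite {x. poly (det (Mp p \<alpha>)) x = 0}" by (rule poly_roots_finite)
    then show ?thesis unfolding droots_def dpoly_poly .
  qed
  have inD: "x \<in> droots p \<alpha> \<longleftrightarrow> kerZ p \<alpha> x" for x unfolding droots_def using det_iff by simp
  have roots: "x = a \<or> b \<le> x" if "x \<in> droots p \<alpha>" for x
  proof -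
    have k: "kerZ p \<alpha> x" using that inD by simp
    show ?thesis
    proof (cases "x < 0")
      case True then show ?thesis using a k by blast
    next
      case False
      show ?thesis
      proof (rule ccontr)
        assume "\<not> (x = a \<or> b \<le> x)"
        then have "PDQ p \<alpha> x" using b False by auto
        then show False using ker_notPD[OF k] by simp
      qed
    qed
  qed
  have r1: "r1 p \<alpha> = a" unfolding r1_def
  proof (rule Min_eqI[OF fin])
    show "a \<in> droots p \<alpha>" using inD a(2) by simp
    fix y assume "y \<in> droots p \<alpha>" then show "a \<le> y" using roots[of y] a(1) b(1) by force
  qed
  have r2: "r2 p \<alpha> = b" unfolding r2_def r1
  proof (rule Min_eqI)
    show "finite (droots p \<alpha> - {a})" using fin by simp
    show "b \<in> droots p \<alpha> - {a}" using inD b(1,2) a(1) by simp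
    fix y assume "y \<in> droots p \<alpha> - {a}" then show "b \<le> y" using roots by force
  qed
  show ?thesis unfolding r1 r2
  proof
    assume P: "PDQ p \<alpha> x"
    have "a < x"
    proof (rule ccontr)
      assume "\<not> a < x"
      then have "PDQ p \<alpha> a" using PDQ_convex[OF P P0, of a] a(1) by simp
      then show False using ker_notPD[OF a(2)] by simp
    qed
    moreover have "x < b"
    proof (rule ccontr)
      assume "\<not> x < b"
      then have "PDQ p \<alpha> b" using PDQ_convex[OF P0 P, of b] b(1) by simp
      then show False using ker_notPD[OF b(2)] by simp
    qed
    ultimately show "a < x \<and> x < b" ..
  next
    assume "a < x \<and> x < b"
    then show "PDQ p \<alpha> x" using a(4) b(3) by (cases "x \<le> 0") auto
  qed
qed



definition SS :: "(nat \<Rightarrow> nat) \<Rightarrow> nat \<Rightarrow> nat" where "SS n k = (\<Sum>j<k. n j)"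

lemma SS_mono: "a \<le> b \<Longrightarrow> SS n a \<le> SS n b"
  unfolding SS_def by (rule sum_mono2) auto

lemma SS_Suc: "SS n (Suc k) = SS n k + n k" unfolding SS_def by simp

lemma grp_props: assumes "i < SS n p"
  shows "grp n i < p" "SS n (grp n i) \<le> i" "i < SS n (Suc (grp n i))"
proof -
  have p: "0 < p" using assms unfolding SS_def by (cases p) auto
  have ex: "i < SS n (Suc (p - 1))" using assms p by simp
  have gdef: "grp n i = (LEAST k. i < SS n (Suc k))" unfolding grp_def SS_def by simp
  show "i < SS n (Suc (grp n i))" unfolding gdef by (rule LeastI[of _ "p - 1"]) (rule ex)
  have "grp n i \<le> p - 1" unfolding gdef by (rule Least_le) (rule ex)
  then show "grp n i < p" using p by simp
  show "SS n (grp n i) \<le> i"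
  proof (cases "grp n i")
    case 0 then show ?thesis by (simp add: SS_def)
  next
    case (Suc g)
    then have "\<not> i < SS n (Suc g)" unfolding gdef using not_less_Least[of g "\<lambda>k. i < SS n (Suc k)"]
      by (metis gdef lessI)
    then show ?thesis using Suc by simp
  qed
qed

lemma grp_eq: assumes "SS n k \<le> i" "i < SS n (Suc k)" shows "grp n i = k"
proof -
  have gdef: "grp n i = (LEAST k. i < SS n (Suc k))" unfolding grp_def SS_def by simp
  show ?thesis unfolding gdef
  proof (rule Least_equality)
    show "i < SS n (Suc k)" by (rule assms(2))
    fix k' assume k': "i < SS n (Suc k')"
    show "k \<le> k'"
    proof (rule ccontr)
      assume "\<not> k \<le> k'"
      then have "SS n (Suc k') \<le> SS n k" by (intro SS_mono) simp
      then show False using k' assms(1) by simp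
    qed
  qed
qed

definition GS :: "nat \<Rightarrow> (nat \<Rightarrow> nat) \<Rightarrow> nat \<Rightarrow> nat set" where
  "GS p n k = {i \<in> {..<SS n p}. grp n i = k}"

lemma GS_eq: assumes "k < p" shows "GS p n k = {SS n k..<SS n (Suc k)}"
proof -
  have "SS n (Suc k) \<le> SS n p" using assms by (intro SS_mono) simp
  show ?thesis
  proof (rule equalityI; rule subsetI)
    fix x assume "x \<in> GS p n k"
    then have x: "x < SS n p" "grp n x = k" unfolding GS_def by auto
    show "x \<in> {SS n k..<SS n (Suc k)}" using grp_props(2,3)[OF x(1)] x(2) by simp
  next
    fix x assume "x \<in> {SS n k..<SS n (Suc k)}"
    then have x: "SS n k \<le> x" "x < SS n (Suc k)" by auto
    have "x < SS n p" using x(2) \<open>SS n (Suc k) \<le> SS n p\<close> by linarith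
    then show "x \<in> GS p n k" unfolding GS_def using grp_eq[OF x] by simp
  qed
qed

lemma GS_card: "k < p \<Longrightarrow> card (GS p n k) = n k"
  using GS_eq[of k p n] by (simp add: SS_Suc)

lemma GS_fin: "finite (GS p n k)" unfolding GS_def by simp

lemma sum_groups: "(\<Sum>i<SS n p. f i) = (\<Sum>k<p. \<Sum>i\<in>GS p n k. f i)"
proof -
  have "grp n ` {..<SS n p} \<subseteq> {..<p}" using grp_props(1)[of _ n p] by auto
  then show ?thesis unfolding GS_def by (intro sum.group[symmetric]) auto
qed

definition Bf :: "(nat \<Rightarrow> nat) \<Rightarrow> (nat \<Rightarrow> real) \<Rightarrow> real \<Rightarrow> nat \<Rightarrow> nat \<Rightarrow> real" where
  "Bf n b c i j = (if grp n i = grp n j then (if i = j then 1 else b (grp n i)) else c)"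

definition qF :: "nat \<Rightarrow> (nat \<Rightarrow> nat) \<Rightarrow> (nat \<Rightarrow> real) \<Rightarrow> real \<Rightarrow> (nat \<Rightarrow> real) \<Rightarrow> real" where
  "qF p n b c v = (\<Sum>i<SS n p. \<Sum>j<SS n p. v i * Bf n b c i j * v j)"

definition sg :: "nat \<Rightarrow> (nat \<Rightarrow> nat) \<Rightarrow> (nat \<Rightarrow> real) \<Rightarrow> nat \<Rightarrow> real" where
  "sg p n v k = (\<Sum>i\<in>GS p n k. v i)"

lemma sum_groups_const: fixes h f :: "nat \<Rightarrow> real" shows "(\<Sum>i<SS n p. h (grp n i) * f i) = (\<Sum>k<p. h k * (\<Sum>i\<in>GS p n k. f i))"
  unfolding sum_groups
proof (intro sum.cong refl)
  fix k
  have "(\<Sum>i\<in>GS p n k. h (grp n i) * f i) = (\<Sum>i\<in>GS p n k. h k * f i)"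
    by (intro sum.cong refl) (simp add: GS_def)
  then show "(\<Sum>i\<in>GS p n k. h (grp n i) * f i) = h k * (\<Sum>i\<in>GS p n k. f i)"
    by (simp add: sum_distrib_left)
qed

lemma qF_ident: "qF p n b c v = (\<Sum>i<SS n p. (1 - b (grp n i)) * (v i)\<^sup>2)
   + (\<Sum>k<p. (b k - c) * (sg p n v k)\<^sup>2) + c * (\<Sum>i<SS n p. v i)\<^sup>2"
proof -
  let ?N = "SS n p"
  let ?g = "grp n"
  have split: "v i * Bf n b c i j * v j = (if i = j then (1 - b (?g i)) * (v i)\<^sup>2 else 0)
     + (if ?g i = ?g j then v i * (b (?g i) - c) * v j else 0) + c * (v i * v j)" for i j
    unfolding Bf_def by (auto simp: algebra_simps power2_eq_square)
  have T1: "(\<Sum>i<?N. \<Sum>j<?N. (if i = j then (1 - b (?g i)) * (v i)\<^sup>2 else 0))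
      = (\<Sum>i<?N. (1 - b (?g i)) * (v i)\<^sup>2)"
    by (intro sum.cong refl) (simp add: sum.delta)
  have inner: "(\<Sum>j<?N. (if ?g i = ?g j then v i * (b (?g i) - c) * v j else 0))
      = (b (?g i) - c) * (v i * sg p n v (?g i))" for i
  proof -
    have "(\<Sum>j<?N. (if ?g i = ?g j then v i * (b (?g i) - c) * v j else 0))
        = (\<Sum>j\<in>{j \<in> {..<?N}. ?g j = ?g i}. v i * (b (?g i) - c) * v j)"
      by (simp add: sum.inter_filter[symmetric] eq_commute)
    also have "\<dots> = (b (?g i) - c) * (v i * sg p n v (?g i))"
      unfolding sg_def GS_def by (simp add: sum_distrib_left algebra_simps)
    finally show ?thesis .
  qed
  have T2: "(\<Sum>i<?N. \<Sum>j<?N. (if ?g i = ?g j then v i * (b (?g i) - c) * v j else 0))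
      = (\<Sum>k<p. (b k - c) * (sg p n v k)\<^sup>2)"
  proof -
    have "(\<Sum>i<?N. \<Sum>j<?N. (if ?g i = ?g j then v i * (b (?g i) - c) * v j else 0))
        = (\<Sum>i<?N. (b (?g i) - c) * (v i * sg p n v (?g i)))" by (simp add: inner)
    also have "\<dots> = (\<Sum>k<p. (b k - c) * (\<Sum>i\<in>GS p n k. v i * sg p n v (?g i)))"
      by (rule sum_groups_const[where h = "\<lambda>k. b k - c"])
    also have "\<dots> = (\<Sum>k<p. (b k - c) * (sg p n v k)\<^sup>2)"
    proof (intro sum.cong refl)
      fix k
      have "(\<Sum>i\<in>GS p n k. v i * sg p n v (?g i)) = (\<Sum>i\<in>GS p n k. v i * sg p n v k)"
        by (intro sum.cong refl) (simp add: GS_def)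
      also have "\<dots> = (sg p n v k)\<^sup>2" unfolding sg_def by (simp add: power2_eq_square sum_distrib_right)
      finally show "(b k - c) * (\<Sum>i\<in>GS p n k. v i * sg p n v (?g i)) = (b k - c) * (sg p n v k)\<^sup>2"
        by simp
    qed
    finally show ?thesis .
  qed
  have T3: "(\<Sum>i<?N. \<Sum>j<?N. c * (v i * v j)) = c * (\<Sum>i<?N. v i)\<^sup>2"
  proof -
    have "(\<Sum>i<?N. \<Sum>j<?N. c * (v i * v j)) = (\<Sum>i<?N. c * (v i * (\<Sum>j<?N. v j)))"
      by (simp add: sum_distrib_left)
    also have "\<dots> = c * ((\<Sum>i<?N. v i) * (\<Sum>j<?N. v j))"
      by (simp only: sum_distrib_left[symmetric] sum_distrib_right[symmetric])
    finally show ?thesis by (simp add: power2_eq_square)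
  qed
  show ?thesis unfolding qF_def split sum.distrib T1 T2 T3 ..
qed

lemma sum_v_groups: "(\<Sum>i<SS n p. v i) = (\<Sum>k<p. sg p n v k)"
  unfolding sg_def by (rule sum_groups)

lemma qF_diff: assumes n1: "\<forall>k<p. 1 \<le> n k"
  shows "qF p n b c v = Qf p (alpha n b) c (sg p n v)
     + (\<Sum>k<p. (1 - b k) * ((\<Sum>i\<in>GS p n k. (v i)\<^sup>2) - (sg p n v k)\<^sup>2 / n k))"
proof -
  have A: "(\<Sum>i<SS n p. (1 - b (grp n i)) * (v i)\<^sup>2) = (\<Sum>k<p. (1 - b k) * (\<Sum>i\<in>GS p n k. (v i)\<^sup>2))"
    by (rule sum_groups_const[where h = "\<lambda>k. 1 - b k"])
  have B: "(\<Sum>k<p. (1 - b k) * (\<Sum>i\<in>GS p n k. (v i)\<^sup>2) + (b k - c) * (sg p n v k)\<^sup>2)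
     = (\<Sum>k<p. (alpha n b k - c) * (sg p n v k)\<^sup>2
          + (1 - b k) * ((\<Sum>i\<in>GS p n k. (v i)\<^sup>2) - (sg p n v k)\<^sup>2 / n k))"
  proof (intro sum.cong refl)
    fix k assume "k \<in> {..<p}"
    then have "real (n k) \<noteq> 0" using n1 by force
    then show "(1 - b k) * (\<Sum>i\<in>GS p n k. (v i)\<^sup>2) + (b k - c) * (sg p n v k)\<^sup>2 =
         (alpha n b k - c) * (sg p n v k)\<^sup>2 + (1 - b k) * ((\<Sum>i\<in>GS p n k. (v i)\<^sup>2) - (sg p n v k)\<^sup>2 / n k)"
      unfolding alpha_def by (simp add: field_simps)
  qed
  show ?thesis
    unfolding qF_ident A unfolding sum_v_groups[where v=v] Qf_def
    using B by (simp add: sum.distrib)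
qed

lemma group_cs: assumes "k < p" "1 \<le> n k"
  shows "(sg p n v k)\<^sup>2 / n k \<le> (\<Sum>i\<in>GS p n k. (v i)\<^sup>2)"
proof -
  have ne: "GS p n k \<noteq> {}" using GS_card[OF assms(1), of n] assms(2) by auto
  have "(sg p n v k)\<^sup>2 \<le> (\<Sum>i\<in>GS p n k. 1 * (v i)\<^sup>2) * (\<Sum>i\<in>GS p n k. 1 / 1)"
    unfolding sg_def by (rule wCS) (use ne GS_fin in auto)
  also have "\<dots> = (\<Sum>i\<in>GS p n k. (v i)\<^sup>2) * n k" using GS_card[OF assms(1), of n] by simp
  finally show ?thesis using assms(2) by (simp add: divide_le_eq)
qed

lemma BLOCK: assumes n1: "\<forall>k<p. 1 \<le> n k" and bl: "\<forall>k<p. b k < 1"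
  shows "(\<forall>v. (\<exists>i<SS n p. v i \<noteq> 0) \<longrightarrow> 0 < qF p n b c v) \<longleftrightarrow> PDQ p (alpha n b) c"
proof
  assume H: "\<forall>v. (\<exists>i<SS n p. v i \<noteq> 0) \<longrightarrow> 0 < qF p n b c v"
  show "PDQ p (alpha n b) c" unfolding PDQ_def
  proof (intro allI impI)
    fix u :: "nat \<Rightarrow> real" assume u: "\<exists>i<p. u i \<noteq> 0"
    then obtain k0 where k0: "k0 < p" "u k0 \<noteq> 0" by blast
    define v where "v i = u (grp n i) / n (grp n i)" for i
    have sgv: "sg p n v k = u k" if "k < p" for k
    proof -
      have "sg p n v k = (\<Sum>i\<in>GS p n k. u k / n k)" unfolding sg_def v_def
        by (intro sum.cong refl) (simp add: GS_def)
      also have "\<dots> = u k" using GS_card[OF that, of n] n1 that by force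
      finally show ?thesis .
    qed
    have sqv: "(\<Sum>i\<in>GS p n k. (v i)\<^sup>2) - (sg p n v k)\<^sup>2 / n k = 0" if "k < p" for k
    proof -
      have "(\<Sum>i\<in>GS p n k. (v i)\<^sup>2) = (\<Sum>i\<in>GS p n k. (u k / n k)\<^sup>2)" unfolding v_def
        by (intro sum.cong refl) (simp add: GS_def)
      also have "\<dots> = n k * (u k / n k)\<^sup>2" using GS_card[OF that, of n] by simp
      also have "\<dots> = (u k)\<^sup>2 / n k" using n1 that by (simp add: power2_eq_square field_simps)
      finally show ?thesis using sgv[OF that] by simp
    qed
    have e1: "(\<Sum>i<p. (alpha n b i - c) * (sg p n v i)\<^sup>2) = (\<Sum>i<p. (alpha n b i - c) * (u i)\<^sup>2)"
      by (intro sum.cong refl) (simp add: sgv)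
    have e2: "(\<Sum>i<p. sg p n v i) = (\<Sum>i<p. u i)" by (intro sum.cong refl) (simp add: sgv)
    have "Qf p (alpha n b) c (sg p n v) = Qf p (alpha n b) c u" unfolding Qf_def e1 e2 ..
    moreover have "qF p n b c v = Qf p (alpha n b) c (sg p n v)"
      unfolding qF_diff[OF n1] using sqv by simp
    moreover have "\<exists>i<SS n p. v i \<noteq> 0"
    proof -
      have "GS p n k0 \<noteq> {}" using GS_card[OF k0(1), of n] n1 k0(1) by force
      then obtain i where i: "i \<in> GS p n k0" by blast
      then have "i < SS n p" "grp n i = k0" unfolding GS_def by auto
      moreover have "real (n k0) \<noteq> 0" using n1 k0(1) by force
      ultimately show ?thesis using k0(2) unfolding v_def by auto
    qed
    ultimately show "0 < Qf p (alpha n b) c u" using H by auto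
  qed
next
  assume P: "PDQ p (alpha n b) c"
  show "\<forall>v. (\<exists>i<SS n p. v i \<noteq> 0) \<longrightarrow> 0 < qF p n b c v"
  proof (intro allI impI)
    fix v :: "nat \<Rightarrow> real" assume v: "\<exists>i<SS n p. v i \<noteq> 0"
    show "0 < qF p n b c v"
    proof (cases "\<exists>k<p. sg p n v k \<noteq> 0")
      case True
      then have "0 < Qf p (alpha n b) c (sg p n v)" using P unfolding PDQ_def by blast
      moreover have "0 \<le> (\<Sum>k<p. (1 - b k) * ((\<Sum>i\<in>GS p n k. (v i)\<^sup>2) - (sg p n v k)\<^sup>2 / n k))"
      proof (rule sum_nonneg)
        fix k assume k: "k \<in> {..<p}"
        then have "0 \<le> 1 - b k" using bl by (simp add: less_imp_le)
        moreover have "0 \<le> (\<Sum>i\<in>GS p n k. (v i)\<^sup>2) - (sg p n v k)\<^sup>2 / n k"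
          using group_cs[of k p n v] k n1 by simp
        ultimately show "0 \<le> (1 - b k) * ((\<Sum>i\<in>GS p n k. (v i)\<^sup>2) - (sg p n v k)\<^sup>2 / n k)"
          by simp
      qed
      ultimately show ?thesis unfolding qF_diff[OF n1] by linarith
    next
      case False
      then have s0: "\<forall>k<p. sg p n v k = 0" by blast
      have "(\<Sum>i<SS n p. v i) = 0" unfolding sum_v_groups using s0 by simp
      moreover have "(\<Sum>k<p. (b k - c) * (sg p n v k)\<^sup>2) = 0" using s0 by simp
      moreover obtain i where i: "i < SS n p" "v i \<noteq> 0" using v by blast
      have "0 < (\<Sum>i<SS n p. (1 - b (grp n i)) * (v i)\<^sup>2)"
      proof (rule sum_pos2[of _ i])
        show "0 < (1 - b (grp n i)) * (v i)\<^sup>2" using i bl grp_props(1)[OF i(1)] by simp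
        fix j assume "j \<in> {..<SS n p}"
        then have "grp n j < p" using grp_props(1) by simp
        then show "0 \<le> (1 - b (grp n j)) * (v j)\<^sup>2" using bl by (simp add: less_imp_le)
      qed (use i in auto)
      ultimately show ?thesis unfolding qF_ident by simp
    qed
  qed
qed

lemma block_eq: "block_mat p n b (\<lambda>k l. c) = mat (SS n p) (SS n p) (\<lambda>(i,j). Bf n b c i j)"
  unfolding block_mat_def Bf_def SS_def by simp

lemma quad_eq: assumes "v \<in> carrier_vec (SS n p)"
  shows "v \<bullet> (block_mat p n b (\<lambda>k l. c) *\<^sub>v v) = qF p n b c (\<lambda>i. v $ i)"
proof -
  have "v \<bullet> (block_mat p n b (\<lambda>k l. c) *\<^sub>v v) = (\<Sum>i<SS n p. v $ i * (\<Sum>j<SS n p. Bf n b c i j * v $ j))"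
    using assms unfolding block_eq scalar_prod_def
    by (intro sum.cong) (auto simp: atLeast0LessThan scalar_prod_def)
  also have "\<dots> = qF p n b c (\<lambda>i. v $ i)" unfolding qF_def
    by (simp add: sum_distrib_left mult.assoc)
  finally show ?thesis .
qed

lemma pos_block: "pos_def (block_mat p n b (\<lambda>k l. c)) \<longleftrightarrow> (\<forall>v. (\<exists>i<SS n p. v i \<noteq> 0) \<longrightarrow> 0 < qF p n b c v)"
proof -
  let ?M = "block_mat p n b (\<lambda>k l. c)"
  have dim: "dim_row ?M = SS n p" unfolding block_eq by simp
  have car: "?M \<in> carrier_mat (SS n p) (SS n p)" unfolding block_eq by simp
  have sym: "?M\<^sup>T = ?M" unfolding block_eq by (rule eq_matI) (auto simp: Bf_def)
  have "pos_def ?M \<longleftrightarrow> (\<forall>v \<in> carrier_vec (SS n p). v \<noteq> 0\<^sub>v (SS n p) \<longrightarrow> 0 < v \<bullet> (?M *\<^sub>v v))"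
    unfolding pos_def_def dim using car sym by simp
  also have "\<dots> \<longleftrightarrow> (\<forall>v. (\<exists>i<SS n p. v i \<noteq> 0) \<longrightarrow> 0 < qF p n b c v)"
  proof
    assume H: "\<forall>v \<in> carrier_vec (SS n p). v \<noteq> 0\<^sub>v (SS n p) \<longrightarrow> 0 < v \<bullet> (?M *\<^sub>v v)"
    show "\<forall>v. (\<exists>i<SS n p. v i \<noteq> 0) \<longrightarrow> 0 < qF p n b c v"
    proof (intro allI impI)
      fix v :: "nat \<Rightarrow> real" assume v: "\<exists>i<SS n p. v i \<noteq> 0"
      define w where "w = vec (SS n p) v"
      have wc: "w \<in> carrier_vec (SS n p)" unfolding w_def by simp
      have "w \<noteq> 0\<^sub>v (SS n p)"
      proof
        assume "w = 0\<^sub>v (SS n p)"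
        then have "\<forall>i<SS n p. v i = 0" unfolding w_def by (metis index_vec index_zero_vec(1))
        then show False using v by blast
      qed
      then have "0 < w \<bullet> (?M *\<^sub>v w)" using H wc by blast
      also have "w \<bullet> (?M *\<^sub>v w) = qF p n b c (\<lambda>i. w $ i)" by (rule quad_eq[OF wc])
      also have "qF p n b c (\<lambda>i. w $ i) = qF p n b c v" unfolding qF_def w_def
        by (intro sum.cong refl) simp
      finally show "0 < qF p n b c v" .
    qed
  next
    assume H: "\<forall>v. (\<exists>i<SS n p. v i \<noteq> 0) \<longrightarrow> 0 < qF p n b c v"
    show "\<forall>v \<in> carrier_vec (SS n p). v \<noteq> 0\<^sub>v (SS n p) \<longrightarrow> 0 < v \<bullet> (?M *\<^sub>v v)"
    proof (intro ballI impI)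
      fix v :: "real vec" assume vc: "v \<in> carrier_vec (SS n p)" and nz: "v \<noteq> 0\<^sub>v (SS n p)"
      have "\<exists>i<SS n p. v $ i \<noteq> 0"
      proof (rule ccontr)
        assume "\<not> (\<exists>i<SS n p. v $ i \<noteq> 0)"
        then have "v = 0\<^sub>v (SS n p)" using vc by (intro eq_vecI) auto
        then show False using nz by simp
      qed
      then have "0 < qF p n b c (\<lambda>i. v $ i)" using H by blast
      then show "0 < v \<bullet> (?M *\<^sub>v v)" using quad_eq[OF vc] by simp
    qed
  qed
  finally show ?thesis .
qed



lemma alpha_lt1: assumes "2 \<le> n k" "b k < 1" shows "alpha n b k < 1"
proof -
  have n: "real (n k) \<ge> 2" using assms(1) by simp
  have "alpha n b k = 1 / real (n k) + (real (n k) - 1) / real (n k) * b k" unfolding alpha_def by simp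
  also have "\<dots> < 1 / real (n k) + (real (n k) - 1) / real (n k) * 1"
    using n assms(2) by (intro add_strict_left_mono mult_strict_left_mono) auto
  also have "\<dots> = 1" using n by (simp add: field_simps)
  finally show ?thesis .
qed

lemma PDQ_diag: assumes "PDQ p \<alpha> x" "k < p" shows "0 < \<alpha> k"
proof -
  define u :: "nat \<Rightarrow> real" where "u i = (if i = k then 1 else 0)" for i
  have "0 < Qf p \<alpha> x u" using assms unfolding PDQ_def u_def by force
  moreover have "(\<Sum>i<p. (\<alpha> i - x) * (u i)\<^sup>2) = \<alpha> k - x"
  proof -
    have "(\<Sum>i<p. (\<alpha> i - x) * (u i)\<^sup>2) = (\<Sum>i<p. if i = k then \<alpha> k - x else 0)"
      by (intro sum.cong refl) (simp add: u_def)
    then show ?thesis using assms(2) by simp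
  qed
  moreover have "(\<Sum>i<p. u i) = 1" using assms(2) unfolding u_def by simp
  ultimately show ?thesis unfolding Qf_def by simp
qed

theorem theorem3:
  fixes p :: nat and n :: "nat \<Rightarrow> nat" and b :: "nat \<Rightarrow> real" and c :: real
  assumes "p \<ge> 2"
    and "\<forall>k<p. n k \<ge> 1"
    and "\<forall>k<p. -1 < b k \<and> b k < 1"
    and "\<forall>k<p. n k = 1 \<longrightarrow> b k = 0"
    and "-1 < c" and "c < 1"
  shows "(pos_def (block_mat p n b (\<lambda>k l. c)) \<longleftrightarrow>
            (\<forall>k<p. 0 < alpha n b k \<and> (n k \<ge> 2 \<longrightarrow> alpha n b k < 1)) \<and>
            r1 p (alpha n b) < c \<and> c < r2 p (alpha n b))
       \<and> (\<forall>k<p. \<forall>\<alpha> \<alpha>'. (\<forall>j<p. 0 < \<alpha> j) \<longrightarrow> (\<forall>j<p. j \<noteq> k \<longrightarrow> \<alpha>' j = \<alpha> j) \<longrightarrow>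
              \<alpha> k \<le> \<alpha>' k \<longrightarrow>
              {r1 p \<alpha> <..< r2 p \<alpha>} \<subseteq> {r1 p \<alpha>' <..< r2 p \<alpha>'})"
proof
  have p: "2 \<le> p" using assms(1) .
  have n1: "\<forall>k<p. 1 \<le> n k" using assms(2) by simp
  have bl: "\<forall>k<p. b k < 1" using assms(3) by simp
  have eq1: "pos_def (block_mat p n b (\<lambda>k l. c)) \<longleftrightarrow> PDQ p (alpha n b) c"
    using pos_block BLOCK[OF n1 bl] by simp
  show "pos_def (block_mat p n b (\<lambda>k l. c)) \<longleftrightarrow>
            (\<forall>k<p. 0 < alpha n b k \<and> (n k \<ge> 2 \<longrightarrow> alpha n b k < 1)) \<and>
            r1 p (alpha n b) < c \<and> c < r2 p (alpha n b)"
    unfolding eq1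
  proof
    assume P: "PDQ p (alpha n b) c"
    have pos: "\<forall>k<p. 0 < alpha n b k" using PDQ_diag[OF P] by blast
    moreover have "\<forall>k<p. n k \<ge> 2 \<longrightarrow> alpha n b k < 1" using alpha_lt1 bl by blast
    moreover have "r1 p (alpha n b) < c \<and> c < r2 p (alpha n b)" using MAIN[OF p pos] P by blast
    ultimately show "(\<forall>k<p. 0 < alpha n b k \<and> (n k \<ge> 2 \<longrightarrow> alpha n b k < 1)) \<and>
            r1 p (alpha n b) < c \<and> c < r2 p (alpha n b)" by blast
  next
    assume R: "(\<forall>k<p. 0 < alpha n b k \<and> (n k \<ge> 2 \<longrightarrow> alpha n b k < 1)) \<and>
            r1 p (alpha n b) < c \<and> c < r2 p (alpha n b)"
    then have pos: "\<forall>k<p. 0 < alpha n b k" by blast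
    show "PDQ p (alpha n b) c" using MAIN[OF p pos] R by blast
  qed
next
  show "\<forall>k<p. \<forall>\<alpha> \<alpha>'. (\<forall>j<p. 0 < \<alpha> j) \<longrightarrow> (\<forall>j<p. j \<noteq> k \<longrightarrow> \<alpha>' j = \<alpha> j) \<longrightarrow>
              \<alpha> k \<le> \<alpha>' k \<longrightarrow>
              {r1 p \<alpha> <..< r2 p \<alpha>} \<subseteq> {r1 p \<alpha>' <..< r2 p \<alpha>'}"
  proof (intro allI impI subsetI)
    fix k \<alpha> \<alpha>' x
    assume k: "k < p" and pos: "\<forall>j<p. 0 < (\<alpha> :: nat \<Rightarrow> real) j"
      and same: "\<forall>j<p. j \<noteq> k \<longrightarrow> \<alpha>' j = \<alpha> j" and le: "\<alpha> k \<le> \<alpha>' k"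
      and x: "x \<in> {r1 p \<alpha> <..< r2 p \<alpha>}"
    have le': "\<forall>j<p. \<alpha> j \<le> \<alpha>' j" using same le by (metis order_refl)
    have pos': "\<forall>j<p. 0 < \<alpha>' j" using pos le' by (meson less_le_trans)
    have "PDQ p \<alpha> x" using MAIN[OF assms(1) pos] x by simp
    then have "PDQ p \<alpha>' x" using PDQ_mono le' by blast
    then show "x \<in> {r1 p \<alpha>' <..< r2 p \<alpha>'}" using MAIN[OF assms(1) pos'] by simp
  qed
qed


end
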